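(* Let $K$ be an algebraically closed field of characteristic zero, let $X=X(N,\sigma)$ be an affine nonsingular toric variety over $K$ on which $K^*$ acts as the one-parameter subgroup corresponding to $a\in N$, and let $\alpha\in\mathbb Z$. Let $H_{\alpha,X}\subset\mathcal O_X$ be the ideal generated by all monomials $z^m$ ($m\in M\cap\sigma^\vee$) of $K^*$-character $\alpha$, i.e. with $(a,m)=\alpha$. Then $H_{\alpha,X}$ is a coherent $K^*$-equivariant ideal sheaf with $(H_{\alpha,X})_q=J_{\alpha,q}$ for every closed point $q\in X-F_X^*$; that is, $H_{\alpha,X}$ is the $\alpha$-torific ideal over $X$.
   Context: $M=\operatorname{Hom}(N,\mathbb Z)$, $X=\operatorname{Spec}K[M\cap\sigma^\vee]$, and $t\in K^*$ acts by $t^*(z^m)=t^{(a,m)}z^m$. Let $F_X=X^{K^*}$, $F_X^+=\{x:\lim_{t\to0}t(x)\in F_X\}$, $F_X^-=\{x:\lim_{t\to\infty}t(x)\in F_X\}$, $F_X^*=(F_X^+\cup F_X^-)-F_X$. For a closed point $q$ with stabilizer $G_q\subset K^*$, $J_{\alpha,q}\subset\mathcal O_{X,q}$ is the ideal generated by all $f\in\mathcal O_{X,q}$ with $t^*f=t^\alpha f$ for all $t\in G_q$. *)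

theory Defs
  imports "HOL-Analysis.Finite_Cartesian_Product" "HOL-Library.Poly_Mapping"
          "HOL-Computational_Algebra.Polynomial"
begin

text \<open>Lattices N = M = Z^n are modelled as int^'n; the pairing (a,m).\<close>
definition pairing :: "int^'n \<Rightarrow> int^'n \<Rightarrow> int" where
  "pairing a m = (\<Sum>i\<in>UNIV. a$i * m$i)"

definition Z_basis :: "(int^'n) set \<Rightarrow> bool" where
  "Z_basis B \<longleftrightarrow> finite B \<and> (\<forall>v::int^'n. \<exists>!c::int^'n \<Rightarrow> int.
      (\<forall>b. b \<notin> B \<longrightarrow> c b = 0) \<and> v = (\<Sum>b\<in>B. c b *s b))"

text \<open>sigma = cone(V) is nonsingular: V is part of a Z-basis of N.\<close>
definition nonsingular_gens :: "(int^'n) set \<Rightarrow> bool" where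
  "nonsingular_gens V \<longleftrightarrow> (\<exists>B. Z_basis B \<and> V \<subseteq> B)"

definition dual_semigroup :: "(int^'n) set \<Rightarrow> (int^'n) set" where
  "dual_semigroup V = {m. \<forall>v\<in>V. pairing v m \<ge> 0}"

definition coord_ring :: "(int^'n) set \<Rightarrow> ((int^'n) \<Rightarrow>\<^sub>0 'K::field) set" where
  "coord_ring V = {f. Poly_Mapping.keys f \<subseteq> dual_semigroup V}"

definition monom :: "int^'n \<Rightarrow> (int^'n) \<Rightarrow>\<^sub>0 'K::field" where
  "monom m = Poly_Mapping.single m 1"

text \<open>Closed points of X = Spec K[S] (K algebraically closed): semigroup homomorphisms S \<rightarrow> (K,*)
  sending 0 to 1, extended by 0 outside S.\<close>
definition toric_points :: "(int^'n) set \<Rightarrow> ((int^'n) \<Rightarrow> 'K::field) set" where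
  "toric_points V = {x. x 0 = 1 \<and>
     (\<forall>m\<in>dual_semigroup V. \<forall>m'\<in>dual_semigroup V. x (m + m') = x m * x m') \<and>
     (\<forall>m. m \<notin> dual_semigroup V \<longrightarrow> x m = 0)}"

definition eval_at :: "((int^'n) \<Rightarrow>\<^sub>0 'K::field) \<Rightarrow> ((int^'n) \<Rightarrow> 'K) \<Rightarrow> 'K" where
  "eval_at f x = (\<Sum>m\<in>Poly_Mapping.keys f. Poly_Mapping.lookup f m * x m)"

definition act :: "int^'n \<Rightarrow> 'K::field \<Rightarrow> ((int^'n) \<Rightarrow> 'K) \<Rightarrow> ((int^'n) \<Rightarrow> 'K)" where
  "act a t x = (\<lambda>m. t powi (pairing a m) * x m)"

definition tstar :: "int^'n \<Rightarrow> 'K::field \<Rightarrow> ((int^'n) \<Rightarrow>\<^sub>0 'K) \<Rightarrow> ((int^'n) \<Rightarrow>\<^sub>0 'K)" where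
  "tstar a t f = (\<Sum>m\<in>Poly_Mapping.keys f. Poly_Mapping.single m (t powi (pairing a m) * Poly_Mapping.lookup f m))"

definition scal :: "'K::field \<Rightarrow> ((int^'n) \<Rightarrow>\<^sub>0 'K) \<Rightarrow> ((int^'n) \<Rightarrow>\<^sub>0 'K)" where
  "scal c f = Poly_Mapping.single 0 c * f"

definition fixed_pts :: "(int^'n) set \<Rightarrow> int^'n \<Rightarrow> ((int^'n) \<Rightarrow> 'K::field) set" where
  "fixed_pts V a = {x\<in>toric_points V. \<forall>t. t \<noteq> 0 \<longrightarrow> act a t x = x}"

text \<open>lim_{t\<rightarrow>0} g(t) = p, for a map g: K^* \<rightarrow> X: the map extends to a morphism A^1 \<rightarrow> X
  (all coordinate functions z^m are polynomial in t) whose value at 0 is p.\<close>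
definition has_limit_at_0 :: "(int^'n) set \<Rightarrow> ('K::field \<Rightarrow> (int^'n) \<Rightarrow> 'K) \<Rightarrow> ((int^'n) \<Rightarrow> 'K) \<Rightarrow> bool" where
  "has_limit_at_0 V g p \<longleftrightarrow> p \<in> toric_points V \<and>
     (\<exists>P :: int^'n \<Rightarrow> 'K poly. \<forall>m\<in>dual_semigroup V.
        (\<forall>t. t \<noteq> 0 \<longrightarrow> poly (P m) t = g t m) \<and> poly (P m) 0 = p m)"

definition F_plus :: "(int^'n) set \<Rightarrow> int^'n \<Rightarrow> ((int^'n) \<Rightarrow> 'K::field) set" where
  "F_plus V a = {x\<in>toric_points V. \<exists>p\<in>fixed_pts V a. has_limit_at_0 V (\<lambda>t. act a t x) p}"

text \<open>t \<rightarrow> \<infinity> is s = 1/t \<rightarrow> 0.\<close>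
definition F_minus :: "(int^'n) set \<Rightarrow> int^'n \<Rightarrow> ((int^'n) \<Rightarrow> 'K::field) set" where
  "F_minus V a = {x\<in>toric_points V. \<exists>p\<in>fixed_pts V a.
       has_limit_at_0 V (\<lambda>s. act a (inverse s) x) p}"

definition F_star :: "(int^'n) set \<Rightarrow> int^'n \<Rightarrow> ((int^'n) \<Rightarrow> 'K::field) set" where
  "F_star V a = (F_plus V a \<union> F_minus V a) - fixed_pts V a"

definition stabilizer :: "int^'n \<Rightarrow> ((int^'n) \<Rightarrow> 'K::field) \<Rightarrow> 'K set" where
  "stabilizer a q = {t. t \<noteq> 0 \<and> act a t q = q}"

text \<open>Local ring O_{X,q}: fractions f/g with f,g \<in> K[S], g(q) \<noteq> 0, represented as pairs;
  two representatives are equal in O_{X,q} iff f*g' = f'*g (K[S] is a domain).\<close>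
definition local_ring :: "(int^'n) set \<Rightarrow> ((int^'n) \<Rightarrow> 'K::field)
    \<Rightarrow> (((int^'n) \<Rightarrow>\<^sub>0 'K) \<times> ((int^'n) \<Rightarrow>\<^sub>0 'K)) set" where
  "local_ring V q = {(f,g). f \<in> coord_ring V \<and> g \<in> coord_ring V \<and> eval_at g q \<noteq> 0}"

definition frac_eq :: "(((int^'n) \<Rightarrow>\<^sub>0 'K::field) \<times> ((int^'n) \<Rightarrow>\<^sub>0 'K))
    \<Rightarrow> (((int^'n) \<Rightarrow>\<^sub>0 'K) \<times> ((int^'n) \<Rightarrow>\<^sub>0 'K)) \<Rightarrow> bool" where
  "frac_eq F G \<longleftrightarrow> fst F * snd G = fst G * snd F"

definition frac_add where
  "frac_add F G = (fst F * snd G + fst G * snd F, snd F * snd G)"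

definition frac_mult where
  "frac_mult F G = (fst F * fst G, snd F * snd G)"

text \<open>The ideal of O_{X,q} generated by a subset A \<subseteq> O_{X,q} (as a set of representatives,
  closed under equality of fractions).\<close>
inductive_set local_ideal_gen :: "(int^'n) set \<Rightarrow> ((int^'n) \<Rightarrow> 'K::field)
    \<Rightarrow> (((int^'n) \<Rightarrow>\<^sub>0 'K) \<times> ((int^'n) \<Rightarrow>\<^sub>0 'K)) set
    \<Rightarrow> (((int^'n) \<Rightarrow>\<^sub>0 'K) \<times> ((int^'n) \<Rightarrow>\<^sub>0 'K)) set"
  for V q A where
  zero: "(0, 1) \<in> local_ideal_gen V q A"
| step: "\<lbrakk>r \<in> local_ring V q; b \<in> A; F \<in> local_ideal_gen V q A\<rbrakk>
          \<Longrightarrow> frac_add (frac_mult r b) F \<in> local_ideal_gen V q A"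
| equiv: "\<lbrakk>F \<in> local_ideal_gen V q A; G \<in> local_ring V q; frac_eq G F\<rbrakk>
          \<Longrightarrow> G \<in> local_ideal_gen V q A"

inductive_set ring_ideal_gen :: "(int^'n) set \<Rightarrow> ((int^'n) \<Rightarrow>\<^sub>0 'K::field) set
    \<Rightarrow> ((int^'n) \<Rightarrow>\<^sub>0 'K) set"
  for V A where
  zero: "0 \<in> ring_ideal_gen V A"
| step: "\<lbrakk>r \<in> coord_ring V; b \<in> A; f \<in> ring_ideal_gen V A\<rbrakk>
          \<Longrightarrow> r * b + f \<in> ring_ideal_gen V A"

definition H_gens :: "(int^'n) set \<Rightarrow> int^'n \<Rightarrow> int \<Rightarrow> ((int^'n) \<Rightarrow>\<^sub>0 'K::field) set" where
  "H_gens V a \<alpha> = {monom m | m. m \<in> dual_semigroup V \<and> pairing a m = \<alpha>}"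

definition semi_inv_local :: "(int^'n) set \<Rightarrow> int^'n \<Rightarrow> int \<Rightarrow> ((int^'n) \<Rightarrow> 'K::field)
    \<Rightarrow> (((int^'n) \<Rightarrow>\<^sub>0 'K) \<times> ((int^'n) \<Rightarrow>\<^sub>0 'K)) set" where
  "semi_inv_local V a \<alpha> q = {F\<in>local_ring V q. \<forall>t\<in>stabilizer a q.
       frac_eq (tstar a t (fst F), tstar a t (snd F)) (scal (t powi \<alpha>) (fst F), snd F)}"

definition J_ideal where
  "J_ideal V a \<alpha> q = local_ideal_gen V q (semi_inv_local V a \<alpha> q)"

text \<open>Stalk (H_{alpha,X})_q = H_{alpha,X} \<cdot> O_{X,q}.\<close>
definition H_stalk where
  "H_stalk V a \<alpha> q = local_ideal_gen V q {(h, 1) | h. h \<in> H_gens V a \<alpha>}"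

end

theory Submission
  imports Defs
begin

lemma pairing_add: "pairing a (m + m') = pairing a m + pairing a m'"
  by (simp add: pairing_def distrib_left sum.distrib)

lemma pairing_zero[simp]: "pairing a 0 = 0"
  by (simp add: pairing_def)

lemma pairing_uminus_left: "pairing (-a) m = - pairing a m"
  by (simp add: pairing_def sum_negf)

lemma pairing_diff: "pairing a (m - m') = pairing a m - pairing a m'"
  by (simp add: pairing_def right_diff_distrib sum_subtractf)

lemma dual_zero[simp]: "0 \<in> dual_semigroup V"
  by (simp add: dual_semigroup_def)

lemma dual_add: "m \<in> dual_semigroup V \<Longrightarrow> m' \<in> dual_semigroup V \<Longrightarrow> m + m' \<in> dual_semigroup V"
  by (auto simp: dual_semigroup_def pairing_add intro: add_nonneg_nonneg)

lemma pm_expand: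
  assumes "finite A" "Poly_Mapping.keys f \<subseteq> A"
  shows "f = (\<Sum>l\<in>A. Poly_Mapping.single l (Poly_Mapping.lookup f l))"
proof (rule poly_mapping_eqI)
  fix k
  have "(\<Sum>l\<in>A. Poly_Mapping.lookup (Poly_Mapping.single l (Poly_Mapping.lookup f l)) k)
        = (\<Sum>l\<in>A. if l = k then Poly_Mapping.lookup f l else 0)"
    by (intro sum.cong) (auto simp: lookup_single when_def)
  also have "\<dots> = Poly_Mapping.lookup f k"
    using assms by (auto simp: sum.delta in_keys_iff)
  finally show "Poly_Mapping.lookup f k = Poly_Mapping.lookup (\<Sum>l\<in>A. Poly_Mapping.single l (Poly_Mapping.lookup f l)) k"
    by (simp add: lookup_sum)
qed

lemma pm_mult_expand:
  fixes f g :: "'a::comm_monoid_add \<Rightarrow>\<^sub>0 'b::comm_semiring_1"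
  assumes "finite A" "Poly_Mapping.keys f \<subseteq> A" "finite B" "Poly_Mapping.keys g \<subseteq> B"
  shows "f * g = (\<Sum>l\<in>A. \<Sum>p\<in>B. Poly_Mapping.single (l + p) (Poly_Mapping.lookup f l * Poly_Mapping.lookup g p))"
proof -
  have "f * g = (\<Sum>l\<in>A. Poly_Mapping.single l (Poly_Mapping.lookup f l)) * (\<Sum>p\<in>B. Poly_Mapping.single p (Poly_Mapping.lookup g p))"
    using pm_expand[OF assms(1,2)] pm_expand[OF assms(3,4)] by simp
  also have "\<dots> = (\<Sum>l\<in>A. \<Sum>p\<in>B. Poly_Mapping.single (l + p) (Poly_Mapping.lookup f l * Poly_Mapping.lookup g p))"
    unfolding sum_distrib_right unfolding sum_distrib_left mult_single ..
  finally show ?thesis .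
qed

lemma lookup_mult_fin:
  fixes f g :: "'a::comm_monoid_add \<Rightarrow>\<^sub>0 'b::comm_semiring_1"
  assumes "finite A" "Poly_Mapping.keys f \<subseteq> A" "finite B" "Poly_Mapping.keys g \<subseteq> B"
  shows "Poly_Mapping.lookup (f * g) k = (\<Sum>l\<in>A. \<Sum>p\<in>B. if l + p = k then Poly_Mapping.lookup f l * Poly_Mapping.lookup g p else 0)"
  by (subst pm_mult_expand[OF assms]) (simp add: lookup_sum lookup_single when_def)

lemma coord_ring_0[simp]: "0 \<in> coord_ring V"
  by (simp add: coord_ring_def)

lemma coord_ring_1[simp]: "1 \<in> coord_ring V"
  by (simp add: coord_ring_def)

lemma coord_ring_add: "f \<in> coord_ring V \<Longrightarrow> g \<in> coord_ring V \<Longrightarrow> f + g \<in> coord_ring V"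
  unfolding coord_ring_def mem_Collect_eq using keys_add[of f g] by (rule order.trans) simp

lemma coord_ring_mult: "f \<in> coord_ring V \<Longrightarrow> g \<in> coord_ring V \<Longrightarrow> f * g \<in> coord_ring V"
proof -
  assume "f \<in> coord_ring V" "g \<in> coord_ring V"
  then have "{a + b |a b. a \<in> Poly_Mapping.keys f \<and> b \<in> Poly_Mapping.keys g} \<subseteq> dual_semigroup V"
    unfolding coord_ring_def by (auto intro!: dual_add)
  then show ?thesis unfolding coord_ring_def mem_Collect_eq using keys_mult[of f g] by (rule order.trans[rotated])
qed

lemma coord_ring_single: "m \<in> dual_semigroup V \<Longrightarrow> Poly_Mapping.single m c \<in> coord_ring V"
  by (simp add: coord_ring_def)

lemma coord_ring_monom: "m \<in> dual_semigroup V \<Longrightarrow> monom m \<in> coord_ring V"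
  by (simp add: coord_ring_def monom_def)

lemma eval_at_superset:
  assumes "finite A" "Poly_Mapping.keys f \<subseteq> A"
  shows "eval_at f x = (\<Sum>m\<in>A. Poly_Mapping.lookup f m * x m)"
  unfolding eval_at_def
proof (rule sum.mono_neutral_left)
  show "finite A" by (rule assms(1))
  show "Poly_Mapping.keys f \<subseteq> A" by (rule assms(2))
  show "\<forall>i\<in>A - Poly_Mapping.keys f. Poly_Mapping.lookup f i * x i = 0"
    by (simp add: not_in_keys_iff_lookup_eq_zero)
qed

lemma eval_at_add: "eval_at (f + g) x = eval_at f x + eval_at g x"
proof -
  let ?A = "Poly_Mapping.keys f \<union> Poly_Mapping.keys g"
  have "eval_at (f + g) x = (\<Sum>m\<in>?A. Poly_Mapping.lookup (f+g) m * x m)"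
    using keys_add[of f g] by (intro eval_at_superset) auto
  also have "\<dots> = (\<Sum>m\<in>?A. Poly_Mapping.lookup f m * x m) + (\<Sum>m\<in>?A. Poly_Mapping.lookup g m * x m)"
    by (simp add: lookup_add distrib_right sum.distrib)
  also have "\<dots> = eval_at f x + eval_at g x"
    by (simp add: eval_at_superset[of ?A f] eval_at_superset[of ?A g])
  finally show ?thesis .
qed

lemma eval_at_0[simp]: "eval_at 0 x = 0"
  by (simp add: eval_at_def)

lemma eval_at_sum: "eval_at (\<Sum>l\<in>L. G l) x = (\<Sum>l\<in>L. eval_at (G l) x)"
  by (induction L rule: infinite_finite_induct) (auto simp: eval_at_add)

lemma eval_at_single: "eval_at (Poly_Mapping.single m c) x = c * x m"
  by (simp add: eval_at_def)

lemma eval_at_1: "x \<in> toric_points V \<Longrightarrow> eval_at 1 x = 1"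
  by (simp add: eval_at_def toric_points_def)

lemma eval_at_mult:
  assumes "f \<in> coord_ring V" "g \<in> coord_ring V" "x \<in> toric_points V"
  shows "eval_at (f * g) x = eval_at f x * eval_at g x"
proof -
  let ?A = "Poly_Mapping.keys f" and ?B = "Poly_Mapping.keys g"
  have "eval_at (f * g) x = eval_at (\<Sum>l\<in>?A. \<Sum>p\<in>?B. Poly_Mapping.single (l + p) (Poly_Mapping.lookup f l * Poly_Mapping.lookup g p)) x"
    by (subst pm_mult_expand[of ?A f ?B g]) auto
  also have "\<dots> = (\<Sum>l\<in>?A. \<Sum>p\<in>?B. Poly_Mapping.lookup f l * Poly_Mapping.lookup g p * x (l + p))"
    by (simp add: eval_at_sum eval_at_single)
  also have "\<dots> = (\<Sum>l\<in>?A. \<Sum>p\<in>?B. (Poly_Mapping.lookup f l * x l) * (Poly_Mapping.lookup g p * x p))"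
    using assms by (intro sum.cong refl) (auto simp: coord_ring_def toric_points_def)
  also have "\<dots> = eval_at f x * eval_at g x"
    by (simp add: eval_at_def sum_product)
  finally show ?thesis .
qed

lemma lookup_tstar: "Poly_Mapping.lookup (tstar a t f) m = t powi (pairing a m) * Poly_Mapping.lookup f m"
proof -
  have "Poly_Mapping.lookup (tstar a t f) m = (\<Sum>m'\<in>Poly_Mapping.keys f. if m' = m then t powi (pairing a m') * Poly_Mapping.lookup f m' else 0)"
    unfolding tstar_def lookup_sum by (intro sum.cong) (auto simp: lookup_single when_def)
  also have "\<dots> = t powi (pairing a m) * Poly_Mapping.lookup f m"
    by (auto simp: sum.delta in_keys_iff)
  finally show ?thesis .
qed

lemma keys_tstar: "Poly_Mapping.keys (tstar a t f) \<subseteq> Poly_Mapping.keys f"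
  by (auto simp: in_keys_iff lookup_tstar)

lemma tstar_add: "tstar a t (f + g) = tstar a t f + tstar a t g"
  by (rule poly_mapping_eqI) (simp add: lookup_tstar lookup_add distrib_left)

lemma tstar_mult:
  assumes "t \<noteq> 0"
  shows "tstar a t (f * g) = tstar a t f * tstar a t g"
proof (rule poly_mapping_eqI)
  fix k
  let ?A = "Poly_Mapping.keys f" and ?B = "Poly_Mapping.keys g"
  have "Poly_Mapping.lookup (tstar a t (f * g)) k = t powi (pairing a k) * (\<Sum>l\<in>?A. \<Sum>p\<in>?B. if l + p = k then Poly_Mapping.lookup f l * Poly_Mapping.lookup g p else 0)"
    by (simp add: lookup_tstar lookup_mult_fin[of ?A f ?B g])
  also have "\<dots> = (\<Sum>l\<in>?A. \<Sum>p\<in>?B. if l + p = k then Poly_Mapping.lookup (tstar a t f) l * Poly_Mapping.lookup (tstar a t g) p else 0)"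
    unfolding sum_distrib_left
    by (intro sum.cong refl) (auto simp: lookup_tstar pairing_add power_int_add assms)
  also have "\<dots> = Poly_Mapping.lookup (tstar a t f * tstar a t g) k"
    by (rule lookup_mult_fin[symmetric]) (use keys_tstar in auto)
  finally show "Poly_Mapping.lookup (tstar a t (f * g)) k = Poly_Mapping.lookup (tstar a t f * tstar a t g) k" .
qed

lemma tstar_monom: "tstar a t (monom m) = Poly_Mapping.single m (t powi pairing a m)"
  by (rule poly_mapping_eqI) (simp add: lookup_tstar monom_def lookup_single when_def)

lemma tstar_coord: "f \<in> coord_ring V \<Longrightarrow> tstar a t f \<in> coord_ring V"
  using keys_tstar unfolding coord_ring_def by blast

lemma lookup_scal: "Poly_Mapping.lookup (scal c f) k = c * Poly_Mapping.lookup f k"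
proof -
  have "Poly_Mapping.lookup (scal c f) k = (\<Sum>l\<in>{0}. \<Sum>p\<in>Poly_Mapping.keys f. if l + p = k then Poly_Mapping.lookup (Poly_Mapping.single 0 c) l * Poly_Mapping.lookup f p else 0)"
    unfolding scal_def by (rule lookup_mult_fin) auto
  also have "\<dots> = c * Poly_Mapping.lookup f k"
    by (auto simp: sum.delta in_keys_iff)
  finally show ?thesis .
qed

lemma scal_eq: "scal c f = Poly_Mapping.single 0 c * f"
  by (simp add: scal_def)

lemma ideal_add:
  assumes "f \<in> ring_ideal_gen V A" "g \<in> ring_ideal_gen V A"
  shows "f + g \<in> ring_ideal_gen V A"
  using assms(1)
proof (induction rule: ring_ideal_gen.induct)
  case zero
  then show ?case using assms(2) by simp
next
  case (step r b f)
  then show ?case using ring_ideal_gen.step[of r V b A "f + g"] by (simp add: add.assoc)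
qed

lemma ideal_mult:
  assumes "f \<in> ring_ideal_gen V A" "r \<in> coord_ring V"
  shows "r * f \<in> ring_ideal_gen V A"
  using assms(1)
proof (induction rule: ring_ideal_gen.induct)
  case zero
  then show ?case by (simp add: ring_ideal_gen.zero)
next
  case (step s b f)
  have "r * (s * b + f) = (r * s) * b + r * f" by (simp add: algebra_simps)
  then show ?case using ring_ideal_gen.step[of "r * s" V b A "r * f", OF coord_ring_mult[OF assms(2) step.hyps(1)] step.hyps(2) step.IH] by simp
qed

lemma ideal_gen_in: "b \<in> A \<Longrightarrow> b \<in> ring_ideal_gen V A"
  using ring_ideal_gen.step[of 1 V b A 0, OF coord_ring_1 _ ring_ideal_gen.zero] by simp

lemma ideal_sub:
  assumes "A \<subseteq> ring_ideal_gen V B"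
  shows "ring_ideal_gen V A \<subseteq> ring_ideal_gen V B"
proof
  fix f assume "f \<in> ring_ideal_gen V A"
  then show "f \<in> ring_ideal_gen V B"
    by (induction rule: ring_ideal_gen.induct)
       (use assms in \<open>auto intro: ring_ideal_gen.zero ideal_add ideal_mult\<close>)
qed

lemma dickson:
  fixes \<phi> :: "'b \<Rightarrow> 'i \<Rightarrow> int"
  assumes "finite I"
  shows "\<forall>X. (\<forall>x\<in>X. \<forall>i\<in>I. 0 \<le> \<phi> x i) \<longrightarrow>
           (\<exists>F\<subseteq>X. finite F \<and> (\<forall>x\<in>X. \<exists>f\<in>F. \<forall>i\<in>I. \<phi> f i \<le> \<phi> x i))"
  using assms
proof (induction I rule: finite_induct)
  case empty
  show ?case
  proof (intro allI impI)
    fix X :: "'b set"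
    show "\<exists>F\<subseteq>X. finite F \<and> (\<forall>x\<in>X. \<exists>f\<in>F. \<forall>i\<in>{}. \<phi> f i \<le> \<phi> x i)"
    proof (cases "X = {}")
      case True then show ?thesis by auto
    next
      case False
      then obtain x0 where "x0 \<in> X" by auto
      then show ?thesis by (intro exI[of _ "{x0}"]) auto
    qed
  qed
next
  case (insert j I)
  show ?case
  proof (intro allI impI)
    fix X :: "'b set"
    assume nn: "\<forall>x\<in>X. \<forall>i\<in>insert j I. 0 \<le> \<phi> x i"
    have nnI: "\<forall>x\<in>X. \<forall>i\<in>I. 0 \<le> \<phi> x i" using nn by auto
    obtain F0 where F0: "F0 \<subseteq> X" "finite F0" "\<forall>x\<in>X. \<exists>f\<in>F0. \<forall>i\<in>I. \<phi> f i \<le> \<phi> x i"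
      using insert.IH[THEN spec, THEN mp, OF nnI] by blast
    define c0 where "c0 = Max (insert 0 ((\<lambda>f. \<phi> f j) ` F0))"
    have c0: "\<phi> f j \<le> c0" if "f \<in> F0" for f
      unfolding c0_def using F0(2) that by (intro Max_ge) auto
    have "\<forall>c. \<exists>F. F \<subseteq> {x\<in>X. \<phi> x j = c} \<and> finite F \<and>
             (\<forall>x\<in>{x\<in>X. \<phi> x j = c}. \<exists>f\<in>F. \<forall>i\<in>I. \<phi> f i \<le> \<phi> x i)"
    proof
      fix c
      show "\<exists>F. F \<subseteq> {x\<in>X. \<phi> x j = c} \<and> finite F \<and>
             (\<forall>x\<in>{x\<in>X. \<phi> x j = c}. \<exists>f\<in>F. \<forall>i\<in>I. \<phi> f i \<le> \<phi> x i)"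
      proof -
        have "\<forall>x\<in>{x\<in>X. \<phi> x j = c}. \<forall>i\<in>I. 0 \<le> \<phi> x i" using nnI by auto
        from insert.IH[THEN spec, THEN mp, OF this] show ?thesis by blast
      qed
    qed
    from choice[OF this] obtain Fc where Fc0: "\<forall>c. Fc c \<subseteq> {x\<in>X. \<phi> x j = c} \<and> finite (Fc c) \<and>
      (\<forall>x\<in>{x\<in>X. \<phi> x j = c}. \<exists>f\<in>Fc c. \<forall>i\<in>I. \<phi> f i \<le> \<phi> x i)"
      by blast
    have Fc: "\<And>c. Fc c \<subseteq> {x\<in>X. \<phi> x j = c}" "\<And>c. finite (Fc c)"
      "\<And>c. \<forall>x\<in>{x\<in>X. \<phi> x j = c}. \<exists>f\<in>Fc c. \<forall>i\<in>I. \<phi> f i \<le> \<phi> x i"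
      using Fc0 by blast+
    define F where "F = F0 \<union> (\<Union>c\<in>{0..<c0}. Fc c)"
    show "\<exists>F\<subseteq>X. finite F \<and> (\<forall>x\<in>X. \<exists>f\<in>F. \<forall>i\<in>insert j I. \<phi> f i \<le> \<phi> x i)"
    proof (intro exI[of _ F] conjI ballI)
      show "F \<subseteq> X" unfolding F_def using F0(1) Fc(1) by blast
      show "finite F" unfolding F_def using F0(2) Fc(2) by (intro finite_UnI finite_UN_I) auto
      fix x assume x: "x \<in> X"
      show "\<exists>f\<in>F. \<forall>i\<in>insert j I. \<phi> f i \<le> \<phi> x i"
      proof (cases "c0 \<le> \<phi> x j")
        case True
        obtain f where f: "f \<in> F0" "\<forall>i\<in>I. \<phi> f i \<le> \<phi> x i" using F0(3) x by blast
        have "f \<in> F" unfolding F_def using f(1) by blast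
        moreover have "\<phi> f j \<le> \<phi> x j" using c0[OF f(1)] True by linarith
        ultimately show ?thesis using f(2) by blast
      next
        case False
        have "\<phi> x j \<in> {0..<c0}" using False nn x by auto
        moreover obtain f where "f \<in> Fc (\<phi> x j)" "\<forall>i\<in>I. \<phi> f i \<le> \<phi> x i"
          using Fc(3)[of "\<phi> x j"] x by blast
        moreover have "\<phi> f j = \<phi> x j" using Fc(1) calculation(2) by blast
        moreover have "f \<in> F" unfolding F_def using calculation(1,2) by blast
        ultimately show ?thesis by (intro bexI[of _ f]) auto
      qed
    qed
  qed
qed

lemma monom_mult: "monom m * monom m' = (monom (m + m') :: (int^'n) \<Rightarrow>\<^sub>0 'K::field)"
  by (simp add: monom_def mult_single)

lemma H_gens_coord: "H_gens V a \<alpha> \<subseteq> coord_ring V"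
  unfolding H_gens_def using coord_ring_monom by blast

lemma part1:
  assumes "finite V"
  shows "\<exists>B. finite B \<and> B \<subseteq> coord_ring V \<and>
             ring_ideal_gen V B = ring_ideal_gen V (H_gens V a \<alpha> :: ((int^'n) \<Rightarrow>\<^sub>0 'K::field) set)"
proof -
  define T where "T = {m. m \<in> dual_semigroup V \<and> pairing a m = \<alpha>}"
  have nn: "\<forall>x\<in>T. \<forall>i\<in>V. 0 \<le> pairing i x" unfolding T_def dual_semigroup_def by auto
  obtain F where F: "F \<subseteq> T" "finite F" "\<forall>x\<in>T. \<exists>f\<in>F. \<forall>i\<in>V. pairing i f \<le> pairing i x"
    using dickson[OF assms, of "\<lambda>m v. pairing v m", THEN spec, THEN mp, OF nn] by blast
  define B where "B = (monom ` F :: ((int^'n) \<Rightarrow>\<^sub>0 'K) set)"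
  have BH: "B \<subseteq> H_gens V a \<alpha>" unfolding B_def H_gens_def using F(1) unfolding T_def by blast
  show ?thesis
  proof (intro exI[of _ B] conjI)
    show "finite B" unfolding B_def using F(2) by simp
    show "B \<subseteq> coord_ring V" using BH H_gens_coord by blast
    show "ring_ideal_gen V B = ring_ideal_gen V (H_gens V a \<alpha>)"
    proof
      show "ring_ideal_gen V B \<subseteq> ring_ideal_gen V (H_gens V a \<alpha>)"
        by (rule ideal_sub) (use BH ideal_gen_in in blast)
      show "ring_ideal_gen V (H_gens V a \<alpha>) \<subseteq> ring_ideal_gen V B"
      proof (rule ideal_sub, rule subsetI)
        fix h assume "h \<in> (H_gens V a \<alpha> :: ((int^'n) \<Rightarrow>\<^sub>0 'K) set)"
        then obtain m where m: "h = monom m" "m \<in> T" unfolding H_gens_def T_def by blast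
        obtain f where f: "f \<in> F" "\<forall>i\<in>V. pairing i f \<le> pairing i m" using F(3) m(2) by blast
        have "m - f \<in> dual_semigroup V" using f(2) by (simp add: dual_semigroup_def pairing_diff)
        then have c: "(monom (m - f) :: ((int^'n) \<Rightarrow>\<^sub>0 'K)) \<in> coord_ring V" by (rule coord_ring_monom)
        have "(monom f :: ((int^'n) \<Rightarrow>\<^sub>0 'K)) \<in> ring_ideal_gen V B"
          using f(1) unfolding B_def by (intro ideal_gen_in) blast
        from ideal_mult[OF this c] show "h \<in> ring_ideal_gen V B"
          by (simp add: m(1) monom_mult)
      qed
    qed
  qed
qed

lemma tstar_zero[simp]: "tstar a t 0 = 0"
  by (simp add: tstar_def)

lemma part2:
  assumes "t \<noteq> 0" "f \<in> ring_ideal_gen V (H_gens V a \<alpha> :: ((int^'n) \<Rightarrow>\<^sub>0 'K::field) set)"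
  shows "tstar a t f \<in> ring_ideal_gen V (H_gens V a \<alpha>)"
  using assms(2)
proof (induction rule: ring_ideal_gen.induct)
  case zero
  then show ?case by (simp add: ring_ideal_gen.zero)
next
  case (step r b f)
  obtain m where m: "b = monom m" "m \<in> dual_semigroup V" "pairing a m = \<alpha>"
    using step.hyps(2) unfolding H_gens_def by blast
  have "tstar a t b = Poly_Mapping.single m (t powi \<alpha>)"
    using tstar_monom[of a t m] m by simp
  then have tb: "tstar a t b = Poly_Mapping.single 0 (t powi \<alpha>) * b"
    by (simp add: m(1) monom_def mult_single)
  have rc: "tstar a t r * Poly_Mapping.single 0 (t powi \<alpha>) \<in> coord_ring V"
    by (intro coord_ring_mult tstar_coord step.hyps(1) coord_ring_single dual_zero)
  have "tstar a t (r * b + f) = (tstar a t r * Poly_Mapping.single 0 (t powi \<alpha>)) * b + tstar a t f"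
    by (simp add: tstar_add tstar_mult[OF assms(1)] tb mult.assoc)
  then show ?case using ring_ideal_gen.step[OF rc step.hyps(2) step.IH] by simp
qed

lemma local_ring_add:
  assumes "q \<in> toric_points V" "F \<in> local_ring V q" "G \<in> local_ring V q"
  shows "frac_add F G \<in> local_ring V q"
  using assms unfolding local_ring_def frac_add_def
  by (auto simp: eval_at_mult coord_ring_add coord_ring_mult)

lemma local_ring_mult:
  assumes "q \<in> toric_points V" "F \<in> local_ring V q" "G \<in> local_ring V q"
  shows "frac_mult F G \<in> local_ring V q"
  using assms unfolding local_ring_def frac_mult_def
  by (auto simp: eval_at_mult coord_ring_mult)

lemma local_ring_01: "q \<in> toric_points V \<Longrightarrow> (0, 1) \<in> local_ring V q"
  by (simp add: local_ring_def eval_at_1)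

lemma lig_local:
  assumes "q \<in> toric_points V" "A \<subseteq> local_ring V q" "F \<in> local_ideal_gen V q A"
  shows "F \<in> local_ring V q"
  using assms(3)
  by (induction rule: local_ideal_gen.induct)
     (use assms(1,2) local_ring_01 local_ring_add local_ring_mult in blast)+

lemma lig_mono:
  assumes "A \<subseteq> A'" "F \<in> local_ideal_gen V q A"
  shows "F \<in> local_ideal_gen V q A'"
  using assms(2)
proof (induction rule: local_ideal_gen.induct)
  case zero then show ?case by (rule local_ideal_gen.zero)
next
  case (step r b F) then show ?case using assms(1) local_ideal_gen.step by blast
next
  case (equiv F G) then show ?case using local_ideal_gen.equiv by blast
qed

lemma frac_eq_assoc_step:
  shows "frac_eq (frac_add (frac_mult r (frac_add (frac_mult s h) b')) F)
                 (frac_add (frac_mult (frac_mult r s) h) (frac_add (frac_mult r b') F))"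
  unfolding frac_eq_def frac_add_def frac_mult_def by (simp add: algebra_simps)

lemma frac_eq_zero_step:
  shows "frac_eq (frac_add (frac_mult r (0, 1)) F) F"
  unfolding frac_eq_def frac_add_def frac_mult_def by (simp add: algebra_simps)

lemma frac_eq_cong_step:
  assumes "frac_eq b b'"
  shows "frac_eq (frac_add (frac_mult r b) F) (frac_add (frac_mult r b') F)"
proof -
  have e: "fst b * snd b' = fst b' * snd b" using assms by (simp add: frac_eq_def)
  have "fst (frac_add (frac_mult r b) F) * snd (frac_add (frac_mult r b') F)
     = fst r * snd r * snd F * snd F * (fst b * snd b') + fst F * snd r * snd r * snd F * (snd b * snd b')"
    unfolding frac_add_def frac_mult_def by (simp add: algebra_simps)
  also have "\<dots> = fst r * snd r * snd F * snd F * (fst b' * snd b) + fst F * snd r * snd r * snd F * (snd b * snd b')"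
    by (simp only: e)
  also have "\<dots> = fst (frac_add (frac_mult r b') F) * snd (frac_add (frac_mult r b) F)"
    unfolding frac_add_def frac_mult_def by (simp add: algebra_simps)
  finally show ?thesis by (simp add: frac_eq_def)
qed

lemma lig_closure:
  assumes q: "q \<in> toric_points V" and A: "A \<subseteq> local_ring V q"
    and b: "b \<in> local_ideal_gen V q A" and F: "F \<in> local_ideal_gen V q A"
  shows "r \<in> local_ring V q \<Longrightarrow> frac_add (frac_mult r b) F \<in> local_ideal_gen V q A"
  using b
proof (induction arbitrary: r rule: local_ideal_gen.induct)
  case zero
  have FL: "F \<in> local_ring V q" using lig_local[OF q A F] .
  show ?case
    by (rule local_ideal_gen.equiv[OF F local_ring_add[OF q local_ring_mult[OF q zero local_ring_01[OF q]] FL] frac_eq_zero_step])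
next
  case (step s h b')
  have FL: "F \<in> local_ring V q" using lig_local[OF q A F] .
  have b'L: "b' \<in> local_ring V q" using lig_local[OF q A step.hyps(3)] .
  have hL: "h \<in> local_ring V q" using A step.hyps(2) by blast
  have rs: "frac_mult r s \<in> local_ring V q" using local_ring_mult[OF q step.prems step.hyps(1)] .
  have Y: "frac_add (frac_mult (frac_mult r s) h) (frac_add (frac_mult r b') F) \<in> local_ideal_gen V q A"
    by (rule local_ideal_gen.step[OF rs step.hyps(2) step.IH[OF step.prems]])
  have XL: "frac_add (frac_mult r (frac_add (frac_mult s h) b')) F \<in> local_ring V q"
    by (intro local_ring_add local_ring_mult q step.prems step.hyps(1) hL b'L FL)
  show ?case
    by (rule local_ideal_gen.equiv[OF Y XL frac_eq_assoc_step])
next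
  case (equiv b' b)
  have FL: "F \<in> local_ring V q" using lig_local[OF q A F] .
  have XL: "frac_add (frac_mult r b) F \<in> local_ring V q"
    by (intro local_ring_add local_ring_mult q equiv.prems equiv.hyps(2) FL)
  show ?case
    by (rule local_ideal_gen.equiv[OF equiv.IH[OF equiv.prems] XL frac_eq_cong_step[OF equiv.hyps(3)]])
qed

lemma laurent_zero:
  fixes c :: "int \<Rightarrow> 'K::field" and G :: "'K set"
  assumes E: "finite E" and G0: "\<forall>t\<in>G. t \<noteq> 0"
    and big: "infinite G \<or> (\<exists>R\<subseteq>G. finite R \<and> (\<forall>e\<in>E. 0 \<le> e \<and> e < int (card R)))"
    and van: "\<forall>t\<in>G. (\<Sum>e\<in>E. c e * t powi e) = 0"
  shows "\<forall>e\<in>E. c e = 0"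
proof (cases "E = {}")
  case True then show ?thesis by simp
next
  case Ene: False
  define N where "N = nat (- Min (insert 0 E))"
  have eN: "0 \<le> e + int N" if "e \<in> E" for e
  proof -
    have "Min (insert 0 E) \<le> e" using E that by (intro Min_le) auto
    then show ?thesis unfolding N_def by linarith
  qed
  define p where "p = (\<Sum>e\<in>E. Polynomial.monom (c e) (nat (e + int N)))"
  have root: "poly p t = 0" if "t \<in> G" for t
  proof -
    have t0: "t \<noteq> 0" using G0 that by blast
    have "poly p t = (\<Sum>e\<in>E. c e * t ^ nat (e + int N))"
      unfolding p_def by (simp add: poly_sum poly_monom)
    also have "\<dots> = (\<Sum>e\<in>E. c e * t powi e) * t ^ N"
      unfolding sum_distrib_right
    proof (intro sum.cong refl)
      fix e assume "e \<in> E"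
      have "t ^ nat (e + int N) = t powi (e + int N)"
        using eN[OF \<open>e \<in> E\<close>] by (simp add: power_int_def)
      also have "\<dots> = t powi e * t ^ N" using t0 by (simp add: power_int_add)
      finally show "c e * t ^ nat (e + int N) = c e * t powi e * t ^ N" by simp
    qed
    also have "\<dots> = 0" using van that by simp
    finally show ?thesis .
  qed
  have p0: "p = 0"
  proof (rule ccontr)
    assume pn: "p \<noteq> 0"
    have fin: "finite {x. poly p x = 0}" by (rule poly_roots_finite[OF pn])
    from big show False
    proof
      assume "infinite G"
      moreover have "G \<subseteq> {x. poly p x = 0}" using root by blast
      ultimately show False using fin finite_subset by blast
    next
      assume "\<exists>R\<subseteq>G. finite R \<and> (\<forall>e\<in>E. 0 \<le> e \<and> e < int (card R))"
      then obtain R where R: "R \<subseteq> G" "finite R" "\<forall>e\<in>E. 0 \<le> e \<and> e < int (card R)" by blast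
      have "N = 0"
      proof -
        have "0 \<le> Min (insert 0 E)" using E R(3) by (subst Min_ge_iff) auto
        then show ?thesis unfolding N_def by simp
      qed
      obtain e0 where "e0 \<in> E" using Ene by blast
      then have cR: "card R > 0" using R(3) by fastforce
      have "degree p \<le> card R - 1"
        unfolding p_def
      proof (rule degree_sum_le[OF E])
        fix e assume "e \<in> E"
        then have "nat (e + int N) \<le> card R - 1" using R(3) \<open>N = 0\<close> by fastforce
        then show "degree (Polynomial.monom (c e) (nat (e + int N))) \<le> card R - 1"
          using degree_monom_le order.trans by blast
      qed
      moreover have "card R \<le> card {x. poly p x = 0}"
        using R(1) root fin by (intro card_mono) auto
      moreover have "card {x. poly p x = 0} \<le> degree p" by (rule card_poly_roots_bound[OF pn])
      ultimately show False using cR by linarith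
    qed
  qed
  show ?thesis
  proof
    fix e assume e: "e \<in> E"
    have "coeff p (nat (e + int N)) = (\<Sum>e'\<in>E. if e' = e then c e' else 0)"
      unfolding p_def coeff_sum
    proof (intro sum.cong refl)
      fix e' assume "e' \<in> E"
      show "coeff (Polynomial.monom (c e') (nat (e' + int N))) (nat (e + int N)) = (if e' = e then c e' else 0)"
        using eN[OF e] eN[OF \<open>e' \<in> E\<close>] by (auto simp: coeff_monom)
    qed
    also have "\<dots> = c e" using e E by simp
    finally show "c e = 0" using p0 by simp
  qed
qed

lemma residue_zero:
  fixes w :: "'x \<Rightarrow> 'K::field" and \<phi> :: "'x \<Rightarrow> int" and d :: int
  assumes X: "finite X" and d0: "d \<ge> 0" and G: "\<forall>t\<in>G. t \<noteq> 0 \<and> t powi d = 1"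
    and big0: "d = 0 \<longrightarrow> infinite G" and bigd: "d > 0 \<longrightarrow> (\<exists>R\<subseteq>G. finite R \<and> card R = nat d)"
    and van: "\<forall>t\<in>G. (\<Sum>x\<in>X. w x * t powi \<phi> x) = 0"
  shows "(\<Sum>x\<in>{x\<in>X. \<phi> x mod d = \<rho> mod d}. w x) = 0"
proof -
  define E where "E = (\<lambda>x. \<phi> x mod d) ` X"
  define c where "c e = (\<Sum>x\<in>{x\<in>X. \<phi> x mod d = e}. w x)" for e
  have van2: "\<forall>t\<in>G. (\<Sum>e\<in>E. c e * t powi e) = 0"
  proof
    fix t assume t: "t \<in> G"
    have tp: "t powi \<phi> x = t powi (\<phi> x mod d)" for x
    proof -
      have t0: "t \<noteq> 0" and td: "t powi d = 1" using G t by auto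
      have "t powi \<phi> x = t powi (d * (\<phi> x div d) + \<phi> x mod d)" by (simp only: mult_div_mod_eq)
      also have "\<dots> = t powi (d * (\<phi> x div d)) * t powi (\<phi> x mod d)"
        by (rule power_int_add) (simp add: t0)
      also have "t powi (d * (\<phi> x div d)) = 1" by (simp add: power_int_mult td)
      finally show ?thesis by simp
    qed
    have "(\<Sum>e\<in>E. c e * t powi e) = (\<Sum>e\<in>E. \<Sum>x\<in>{x\<in>X. \<phi> x mod d = e}. w x * t powi \<phi> x)"
      unfolding c_def sum_distrib_right by (intro sum.cong refl) (simp add: tp)
    also have "\<dots> = (\<Sum>x\<in>X. w x * t powi \<phi> x)"
      unfolding E_def by (rule sum.image_gen[OF X, symmetric])
    also have "\<dots> = 0" using van t by blast
    finally show "(\<Sum>e\<in>E. c e * t powi e) = 0" .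
  qed
  have big: "infinite G \<or> (\<exists>R\<subseteq>G. finite R \<and> (\<forall>e\<in>E. 0 \<le> e \<and> e < int (card R)))"
  proof (cases "d = 0")
    case True then show ?thesis using big0 by blast
  next
    case False
    then have "d > 0" using d0 by simp
    then obtain R where "R \<subseteq> G" "finite R" "card R = nat d" using bigd by blast
    moreover have "\<forall>e\<in>E. 0 \<le> e \<and> e < d" unfolding E_def using \<open>d > 0\<close> by auto
    ultimately show ?thesis using \<open>d > 0\<close> by auto
  qed
  have cz: "\<forall>e\<in>E. c e = 0"
    by (rule laurent_zero[OF _ _ big van2]) (use X G in \<open>auto simp: E_def\<close>)
  show ?thesis
  proof (cases "\<rho> mod d \<in> E")
    case True
    then show ?thesis using cz unfolding c_def by blast
  next
    case False
    then have e: "{x\<in>X. \<phi> x mod d = \<rho> mod d} = {}" unfolding E_def by force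
    show ?thesis unfolding e by simp
  qed
qed

definition proj :: "int^'n \<Rightarrow> int \<Rightarrow> int \<Rightarrow> ((int^'n) \<Rightarrow>\<^sub>0 'K::field) \<Rightarrow> ((int^'n) \<Rightarrow>\<^sub>0 'K)" where
  "proj a d \<rho> f = (\<Sum>m\<in>{m\<in>Poly_Mapping.keys f. pairing a m mod d = \<rho> mod d}. Poly_Mapping.single m (Poly_Mapping.lookup f m))"

lemma lookup_proj: "Poly_Mapping.lookup (proj a d \<rho> f) k = (if pairing a k mod d = \<rho> mod d then Poly_Mapping.lookup f k else 0)"
proof -
  have "Poly_Mapping.lookup (proj a d \<rho> f) k = (\<Sum>m\<in>{m\<in>Poly_Mapping.keys f. pairing a m mod d = \<rho> mod d}. if m = k then Poly_Mapping.lookup f m else 0)"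
    unfolding proj_def lookup_sum by (intro sum.cong) (auto simp: lookup_single when_def)
  also have "\<dots> = (if pairing a k mod d = \<rho> mod d then Poly_Mapping.lookup f k else 0)"
    by (auto simp: sum.delta not_in_keys_iff_lookup_eq_zero)
  finally show ?thesis .
qed

lemma keys_proj: "Poly_Mapping.keys (proj a d \<rho> f) \<subseteq> Poly_Mapping.keys f"
  by (auto simp: in_keys_iff lookup_proj split: if_splits)

lemma proj_coord: "f \<in> coord_ring V \<Longrightarrow> proj a d \<rho> f \<in> coord_ring V"
  using keys_proj unfolding coord_ring_def by blast

lemma keys_scal: "Poly_Mapping.keys (scal c f) \<subseteq> Poly_Mapping.keys f"
  by (auto simp: in_keys_iff lookup_scal)

lemma sum_Plus_pairs:
  assumes "finite A" "finite B"
  shows "(\<Sum>x\<in>(A \<times> B) <+> (A \<times> B). case_sum (\<lambda>(l, p). F l p) (\<lambda>(l, p). H l p) x)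
       = (\<Sum>l\<in>A. \<Sum>p\<in>B. F l p) + (\<Sum>l\<in>A. \<Sum>p\<in>B. H l p)"
  using assms by (simp add: sum.Plus sum.cartesian_product o_def)

lemma mod_add_self_iff: "((\<alpha>::int) + x) mod d = \<alpha> mod d \<longleftrightarrow> x mod d = 0 mod d"
  by (simp add: mod_eq_dvd_iff dvd_eq_mod_eq_0)

lemma semi_key:
  fixes g h :: "(int^'n) \<Rightarrow>\<^sub>0 'K::field"
  assumes d0: "d \<ge> 0" and G: "\<forall>t\<in>G. t \<noteq> 0 \<and> t powi d = 1"
    and big0: "d = 0 \<longrightarrow> infinite G" and bigd: "d > 0 \<longrightarrow> (\<exists>R\<subseteq>G. finite R \<and> card R = nat d)"
    and hyp: "\<forall>t\<in>G. tstar a t g * h = scal (t powi \<alpha>) g * tstar a t h"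
  shows "proj a d \<alpha> g * h = g * proj a d 0 h"
proof (rule poly_mapping_eqI)
  fix k
  define A where "A = Poly_Mapping.keys g"
  define B where "B = Poly_Mapping.keys h"
  have fA: "finite A" and fB: "finite B" by (simp_all add: A_def B_def)
  define wT where "wT l p = (if l + p = k then Poly_Mapping.lookup g l * Poly_Mapping.lookup h p else 0)" for l p
  define X where "X = (A \<times> B) <+> (A \<times> B)"
  define w :: "((int^'n)\<times>(int^'n)) + ((int^'n)\<times>(int^'n)) \<Rightarrow> 'K" where "w = case_sum (\<lambda>(l, p). wT l p) (\<lambda>(l, p). - wT l p)"
  define \<phi> :: "((int^'n)\<times>(int^'n)) + ((int^'n)\<times>(int^'n)) \<Rightarrow> int" where "\<phi> = case_sum (\<lambda>(l, p). pairing a l) (\<lambda>(l, p). \<alpha> + pairing a p)"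
  have van: "\<forall>t\<in>G. (\<Sum>x\<in>X. w x * t powi \<phi> x) = 0"
  proof
    fix t assume t: "t \<in> G"
    have t0: "t \<noteq> 0" using G t by blast
    have "(\<Sum>x\<in>X. w x * t powi \<phi> x) = (\<Sum>x\<in>X. case_sum (\<lambda>(l, p). wT l p * t powi pairing a l) (\<lambda>(l, p). - (wT l p * t powi (\<alpha> + pairing a p))) x)"
    proof (intro sum.cong refl)
      fix x show "w x * t powi \<phi> x = case_sum (\<lambda>(l, p). wT l p * t powi pairing a l) (\<lambda>(l, p). - (wT l p * t powi (\<alpha> + pairing a p))) x"
        by (cases x) (auto simp: w_def \<phi>_def)
    qed
    also have "\<dots> = (\<Sum>l\<in>A. \<Sum>p\<in>B. wT l p * t powi pairing a l) + (\<Sum>l\<in>A. \<Sum>p\<in>B. - (wT l p * t powi (\<alpha> + pairing a p)))"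
      unfolding X_def by (rule sum_Plus_pairs[OF fA fB])
    also have "(\<Sum>l\<in>A. \<Sum>p\<in>B. wT l p * t powi pairing a l) = Poly_Mapping.lookup (tstar a t g * h) k"
    proof -
      have "Poly_Mapping.lookup (tstar a t g * h) k = (\<Sum>l\<in>A. \<Sum>p\<in>B. if l + p = k then Poly_Mapping.lookup (tstar a t g) l * Poly_Mapping.lookup h p else 0)"
        by (rule lookup_mult_fin[OF fA _ fB]) (auto simp: A_def B_def dest: keys_tstar[THEN subsetD])
      also have "\<dots> = (\<Sum>l\<in>A. \<Sum>p\<in>B. wT l p * t powi pairing a l)"
        by (intro sum.cong refl) (simp add: lookup_tstar wT_def)
      finally show ?thesis by simp
    qed
    also have "(\<Sum>l\<in>A. \<Sum>p\<in>B. - (wT l p * t powi (\<alpha> + pairing a p))) = - Poly_Mapping.lookup (scal (t powi \<alpha>) g * tstar a t h) k"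
    proof -
      have "Poly_Mapping.lookup (scal (t powi \<alpha>) g * tstar a t h) k = (\<Sum>l\<in>A. \<Sum>p\<in>B. if l + p = k then Poly_Mapping.lookup (scal (t powi \<alpha>) g) l * Poly_Mapping.lookup (tstar a t h) p else 0)"
        by (rule lookup_mult_fin[OF fA _ fB]) (auto simp: A_def B_def dest: keys_tstar[THEN subsetD] keys_scal[THEN subsetD])
      also have "\<dots> = (\<Sum>l\<in>A. \<Sum>p\<in>B. wT l p * t powi (\<alpha> + pairing a p))"
        by (intro sum.cong refl) (simp add: lookup_tstar lookup_scal wT_def power_int_add t0)
      finally show ?thesis by (simp add: sum_negf)
    qed
    finally show "(\<Sum>x\<in>X. w x * t powi \<phi> x) = 0" using hyp t by simp
  qed
  have fX: "finite X" unfolding X_def using fA fB by simp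
  have "(\<Sum>x\<in>{x\<in>X. \<phi> x mod d = \<alpha> mod d}. w x) = 0"
    by (rule residue_zero[OF fX d0 G big0 bigd van])
  then have "(\<Sum>x\<in>X. if \<phi> x mod d = \<alpha> mod d then w x else 0) = 0"
    by (simp add: sum.inter_filter[OF fX])
  also have "(\<Sum>x\<in>X. if \<phi> x mod d = \<alpha> mod d then w x else 0)
     = (\<Sum>x\<in>X. case_sum (\<lambda>(l, p). if pairing a l mod d = \<alpha> mod d then wT l p else 0)
                           (\<lambda>(l, p). - (if pairing a p mod d = 0 mod d then wT l p else 0)) x)"
  proof (intro sum.cong refl)
    fix x show "(if \<phi> x mod d = \<alpha> mod d then w x else 0) = case_sum (\<lambda>(l, p). if pairing a l mod d = \<alpha> mod d then wT l p else 0)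
                           (\<lambda>(l, p). - (if pairing a p mod d = 0 mod d then wT l p else 0)) x"
      by (cases x) (auto simp: w_def \<phi>_def mod_add_self_iff)
  qed
  also have "\<dots> = (\<Sum>l\<in>A. \<Sum>p\<in>B. if pairing a l mod d = \<alpha> mod d then wT l p else 0)
                 + (\<Sum>l\<in>A. \<Sum>p\<in>B. - (if pairing a p mod d = 0 mod d then wT l p else 0))"
    unfolding X_def by (rule sum_Plus_pairs[OF fA fB])
  also have "(\<Sum>l\<in>A. \<Sum>p\<in>B. if pairing a l mod d = \<alpha> mod d then wT l p else 0) = Poly_Mapping.lookup (proj a d \<alpha> g * h) k"
  proof -
    have "Poly_Mapping.lookup (proj a d \<alpha> g * h) k = (\<Sum>l\<in>A. \<Sum>p\<in>B. if l + p = k then Poly_Mapping.lookup (proj a d \<alpha> g) l * Poly_Mapping.lookup h p else 0)"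
      by (rule lookup_mult_fin[OF fA _ fB]) (auto simp: A_def B_def dest: keys_proj[THEN subsetD])
    also have "\<dots> = (\<Sum>l\<in>A. \<Sum>p\<in>B. if pairing a l mod d = \<alpha> mod d then wT l p else 0)"
      by (intro sum.cong refl) (simp add: lookup_proj wT_def)
    finally show ?thesis by simp
  qed
  also have "(\<Sum>l\<in>A. \<Sum>p\<in>B. - (if pairing a p mod d = 0 mod d then wT l p else 0)) = - Poly_Mapping.lookup (g * proj a d 0 h) k"
  proof -
    have "Poly_Mapping.lookup (g * proj a d 0 h) k = (\<Sum>l\<in>A. \<Sum>p\<in>B. if l + p = k then Poly_Mapping.lookup g l * Poly_Mapping.lookup (proj a d 0 h) p else 0)"
      by (rule lookup_mult_fin[OF fA _ fB]) (auto simp: A_def B_def dest: keys_proj[THEN subsetD])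
    also have "\<dots> = (\<Sum>l\<in>A. \<Sum>p\<in>B. if pairing a p mod d = 0 mod d then wT l p else 0)"
      by (intro sum.cong refl) (simp add: lookup_proj wT_def)
    finally show ?thesis by (simp add: sum_negf)
  qed
  finally show "Poly_Mapping.lookup (proj a d \<alpha> g * h) k = Poly_Mapping.lookup (g * proj a d 0 h) k" by simp
qed

lemma roots_card:
  fixes p :: "'K::field_char_0 poly"
  assumes alg: "\<forall>p :: 'K poly. degree p > 0 \<longrightarrow> (\<exists>x. poly p x = 0)"
  shows "degree p = n \<Longrightarrow> (\<forall>x. poly p x = 0 \<longrightarrow> poly (pderiv p) x \<noteq> 0) \<Longrightarrow> card {x. poly p x = 0} = n"
proof (induction n arbitrary: p)
  case 0
  then have "pderiv p = 0" by (simp add: pderiv_eq_0_iff)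
  then have "{x. poly p x = 0} = {}" using "0.prems"(2) by auto
  then show ?case by simp
next
  case (Suc n)
  then obtain z where z: "poly p z = 0" using alg by fastforce
  then obtain q where pq: "p = [:- z, 1:] * q" using poly_eq_0_iff_dvd by blast
  have p0: "p \<noteq> 0" using Suc.prems(1) by auto
  then have q0: "q \<noteq> 0" using pq by auto
  have "degree ([:- z, 1:] * q) = degree [:- z, 1:] + degree q"
    by (rule degree_mult_eq) (use q0 in auto)
  then have dq: "degree q = n" using Suc.prems(1) pq by simp
  have pd: "pderiv p = q + [:- z, 1:] * pderiv q"
    unfolding pq pderiv_mult by (simp add: pderiv_pCons)
  have roots: "{x. poly p x = 0} = insert z {x. poly q x = 0}"
    unfolding pq by auto
  have zq: "poly q z \<noteq> 0" using Suc.prems(2) z pd by auto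
  have "\<forall>x. poly q x = 0 \<longrightarrow> poly (pderiv q) x \<noteq> 0"
  proof (intro allI impI)
    fix x assume qx: "poly q x = 0"
    then have "poly p x = 0" unfolding pq by simp
    then have "poly (pderiv p) x \<noteq> 0" using Suc.prems(2) by blast
    then show "poly (pderiv q) x \<noteq> 0" using qx pd by simp
  qed
  then have "card {x. poly q x = 0} = n" using Suc.IH dq by blast
  then show ?case unfolding roots using zq poly_roots_finite[OF q0] by simp
qed

lemma roots_unity_card:
  fixes d :: nat
  assumes alg: "\<forall>p :: 'K::field_char_0 poly. degree p > 0 \<longrightarrow> (\<exists>x. poly p x = 0)"
    and d: "d > 0"
  shows "card {x :: 'K. x ^ d = 1} = d"
proof -
  define p :: "'K poly" where "p = Polynomial.monom 1 d + [:-1:]"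
  have dp: "degree p = d" unfolding p_def using d
    by (subst degree_add_eq_left) (auto simp: degree_monom_eq)
  have pp: "poly p x = x ^ d - 1" for x unfolding p_def by (simp add: poly_monom)
  have pdp: "poly (pderiv p) x = of_nat d * x ^ (d - 1)" for x
    unfolding p_def by (simp add: pderiv_add pderiv_monom poly_monom pderiv_pCons)
  have "\<forall>x. poly p x = 0 \<longrightarrow> poly (pderiv p) x \<noteq> 0"
  proof (intro allI impI)
    fix x assume "poly p x = 0"
    then have "x ^ d = 1" using pp by simp
    then have "x \<noteq> 0" using d by (auto simp: power_0_left)
    then show "poly (pderiv p) x \<noteq> 0" using d by (simp add: pdp)
  qed
  from roots_card[OF alg dp this] have "card {x. poly p x = 0} = d" .
  moreover have "{x. poly p x = 0} = {x. x ^ d = 1}" using pp by auto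
  ultimately show ?thesis by simp
qed

lemma toric_nz_add:
  assumes "q \<in> toric_points V" "q m \<noteq> 0" "q m' \<noteq> 0"
  shows "q (m + m') \<noteq> 0" "q (m + m') = q m * q m'"
proof -
  have "m \<in> dual_semigroup V" "m' \<in> dual_semigroup V" using assms unfolding toric_points_def by auto
  then show "q (m + m') = q m * q m'" using assms(1) unfolding toric_points_def by auto
  then show "q (m + m') \<noteq> 0" using assms by simp
qed

lemma toric_nz_dual: "q \<in> toric_points V \<Longrightarrow> q m \<noteq> 0 \<Longrightarrow> m \<in> dual_semigroup V"
  unfolding toric_points_def by auto

lemma limit_generic:
  assumes q: "q \<in> toric_points V" and nn: "\<forall>m. q m \<noteq> 0 \<longrightarrow> 0 \<le> pairing b m"
  defines "p \<equiv> (\<lambda>m. if pairing b m = 0 then q m else (0::'K::field))"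
  shows "p \<in> toric_points V" "\<forall>t. t \<noteq> 0 \<longrightarrow> act b t p = p" "has_limit_at_0 V (\<lambda>t. act b t q) p"
proof -
  show pt: "p \<in> toric_points V"
    unfolding toric_points_def mem_Collect_eq
  proof (intro conjI ballI allI impI)
    show "p 0 = 1" using q by (simp add: p_def toric_points_def)
    fix m assume "m \<notin> dual_semigroup V"
    then show "p m = 0" using q by (simp add: p_def toric_points_def)
  next
    fix m m' assume mm: "m \<in> dual_semigroup V" "m' \<in> dual_semigroup V"
    have qm: "q (m + m') = q m * q m'" using q mm unfolding toric_points_def by blast
    show "p (m + m') = p m * p m'"
    proof (cases "q m = 0 \<or> q m' = 0")
      case True then show ?thesis by (auto simp: p_def qm)
    next
      case False
      then have "0 \<le> pairing b m" "0 \<le> pairing b m'" using nn by auto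
      then show ?thesis by (auto simp: p_def qm pairing_add)
    qed
  qed
  show "\<forall>t. t \<noteq> 0 \<longrightarrow> act b t p = p"
    by (auto simp: act_def p_def fun_eq_iff)
  define P where "P m = Polynomial.monom (q m) (nat (pairing b m))" for m
  show "has_limit_at_0 V (\<lambda>t. act b t q) p"
    unfolding has_limit_at_0_def
  proof (intro conjI exI[of _ P] ballI allI impI pt)
    fix m t :: 'K
    show "poly (P m) 0 = p m" for m
      by (cases "q m = 0") (use nn in \<open>auto simp: P_def p_def poly_monom\<close>)
    fix m
    assume "t \<noteq> 0"
    show "poly (P m) t = act b t q m"
    proof (cases "q m = 0")
      case True then show ?thesis by (simp add: P_def act_def)
    next
      case False
      then have "0 \<le> pairing b m" using nn by auto
      then show ?thesis by (simp add: P_def act_def poly_monom power_int_def)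
    qed
  qed
qed

lemma in_F_plus:
  assumes "q \<in> toric_points V" "\<forall>m. q m \<noteq> 0 \<longrightarrow> 0 \<le> pairing a m"
  shows "q \<in> F_plus V a"
  using limit_generic[OF assms] unfolding F_plus_def fixed_pts_def using assms(1) by blast

lemma act_inverse: "act a (inverse s) x = act (-a) s x"
  by (simp add: act_def fun_eq_iff pairing_uminus_left power_int_inverse power_int_minus)

lemma in_F_minus:
  assumes q: "q \<in> toric_points V" and nn: "\<forall>m. q m \<noteq> 0 \<longrightarrow> pairing a m \<le> 0"
  shows "q \<in> F_minus V a"
proof -
  have nn': "\<forall>m. q m \<noteq> 0 \<longrightarrow> 0 \<le> pairing (-a) m" using nn by (simp add: pairing_uminus_left)
  note L = limit_generic[OF q nn']
  define p where "p = (\<lambda>m. if pairing (-a) m = 0 then q m else 0)"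
  have fix': "act a t p = p" if "t \<noteq> 0" for t
  proof -
    have "act a t p = act (-a) (inverse t) p" using act_inverse[of a "inverse t" p] by simp
    also have "\<dots> = p" using L(2) that unfolding p_def by simp
    finally show ?thesis .
  qed
  have "p \<in> fixed_pts V a" unfolding fixed_pts_def using L(1) fix' unfolding p_def by blast
  moreover have "has_limit_at_0 V (\<lambda>s. act a (inverse s) q) p"
    using L(3) unfolding act_inverse p_def .
  ultimately show ?thesis unfolding F_minus_def using q by blast
qed

lemma two_powi_eq_1: "((2::'K::field_char_0) powi k = 1) \<longleftrightarrow> k = 0"
proof
  assume h: "(2::'K) powi k = 1"
  show "k = 0"
  proof (cases "k \<ge> 0")
    case True
    then have "(2::'K) ^ nat k = 1" using h by (simp add: power_int_def)
    then have "of_nat (2 ^ nat k) = (of_nat 1 :: 'K)" by simp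
    then have "(2::nat) ^ nat k = 1" by (simp only: of_nat_eq_iff)
    then show ?thesis using True by simp
  next
    case False
    have "(2::'K) powi (-k) = 1" using h by (simp add: power_int_minus)
    then have "(2::'K) ^ nat (-k) = 1" using False by (simp add: power_int_def)
    then have "of_nat (2 ^ nat (-k)) = (of_nat 1 :: 'K)" by simp
    then have "(2::nat) ^ nat (-k) = 1" by (simp only: of_nat_eq_iff)
    then show ?thesis using False by simp
  qed
qed simp

lemma fixed_zero:
  assumes "q \<in> fixed_pts V a" "q m \<noteq> (0::'K::field_char_0)"
  shows "pairing a m = 0"
proof -
  have "act a 2 q = q" using assms(1) unfolding fixed_pts_def by simp
  then have "2 powi pairing a m * q m = q m" unfolding act_def by (metis)
  then have "(2::'K) powi pairing a m = 1" using assms(2) by simp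
  then show ?thesis by (simp add: two_powi_eq_1)
qed

lemma d_exists:
  fixes q :: "(int^'n) \<Rightarrow> 'K::field_char_0"
  assumes alg: "\<forall>p :: 'K poly. degree p > 0 \<longrightarrow> (\<exists>x. poly p x = 0)"
    and q: "q \<in> toric_points V" and nF: "q \<notin> F_star V a"
  shows "\<exists>d. d \<ge> 0 \<and> (\<forall>t\<in>stabilizer a q. t \<noteq> 0 \<and> t powi d = 1)
           \<and> (d = 0 \<longrightarrow> infinite (stabilizer a q))
           \<and> (d > 0 \<longrightarrow> (\<exists>R\<subseteq>stabilizer a q. finite R \<and> card R = nat d))
           \<and> (\<forall>m. q m \<noteq> 0 \<longrightarrow> pairing a m mod d = 0)
           \<and> (\<forall>c. c mod d = 0 \<longrightarrow> (\<exists>u. q u \<noteq> 0 \<and> pairing a u = c))"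
proof (cases "\<forall>m. q m \<noteq> 0 \<longrightarrow> pairing a m = 0")
  case True
  have stab: "stabilizer a q = {t. t \<noteq> 0}"
    using True by (auto simp: stabilizer_def act_def fun_eq_iff)
  have "infinite {t::'K. t \<noteq> 0}"
  proof -
    have "{t::'K. t \<noteq> 0} = UNIV - {0}" by auto
    then show ?thesis using infinite_UNIV_char_0 by (metis Diff_infinite_finite finite.emptyI finite_insert)
  qed
  note inf = this
  have q0: "q 0 \<noteq> 0" using q by (simp add: toric_points_def)
  show ?thesis
  proof (rule exI[of _ 0], intro conjI allI impI ballI)
    fix t assume "t \<in> stabilizer a q"
    then show "t \<noteq> 0" unfolding stabilizer_def by simp
  next
    show "infinite (stabilizer a q)" unfolding stab by (rule inf)
  next
    fix m assume "q m \<noteq> 0" then show "pairing a m mod 0 = 0" using True by simp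
  next
    fix c :: int assume "c mod 0 = 0"
    then show "\<exists>u. q u \<noteq> 0 \<and> pairing a u = c" using q0 by (intro exI[of _ 0]) simp
  qed simp_all
next
  case False
  then obtain m0 where m0: "q m0 \<noteq> 0" "pairing a m0 \<noteq> 0" by blast
  have nfix: "q \<notin> fixed_pts V a" using fixed_zero m0 by blast
  then have nPM: "q \<notin> F_plus V a" "q \<notin> F_minus V a" using nF unfolding F_star_def by auto
  obtain m1 where m1: "q m1 \<noteq> 0" "pairing a m1 < 0"
    using in_F_plus[OF q] nPM(1) by (meson not_le)
  obtain m2 where m2: "q m2 \<noteq> 0" "pairing a m2 > 0"
    using in_F_minus[OF q] nPM(2) by (meson not_le)
  define D where "D = {pairing a m | m. q m \<noteq> 0}"
  have D0: "0 \<in> D" unfolding D_def using q by (intro CollectI exI[of _ 0]) (simp add: toric_points_def)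
  have Dadd: "x + y \<in> D" if xy: "x \<in> D" "y \<in> D" for x y
  proof -
    obtain m m' where "x = pairing a m" "q m \<noteq> 0" "y = pairing a m'" "q m' \<noteq> 0" using xy unfolding D_def by blast
    then show ?thesis unfolding D_def using toric_nz_add[OF q] by (intro CollectI exI[of _ "m + m'"]) (simp add: pairing_add)
  qed
  have Dnat: "int k * x \<in> D" if xD: "x \<in> D" for k x
  proof (induction k)
    case 0 then show ?case using D0 by simp
  next
    case (Suc k)
    have "int (Suc k) * x = x + int k * x" by (simp add: algebra_simps)
    then show ?case using Dadd[OF xD Suc.IH] by simp
  qed
  have Dneg: "- x \<in> D" if x: "x \<in> D" for x
  proof -
    have n1: "pairing a m1 \<in> D" "pairing a m2 \<in> D" unfolding D_def using m1 m2 by blast+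
    consider "x = 0" | "x > 0" | "x < 0" by linarith
    then show ?thesis
    proof cases
      case 1 then show ?thesis using D0 by simp
    next
      case 2
      have "- x = int (nat (- pairing a m1 - 1)) * x + int (nat x) * pairing a m1"
        using 2 m1(2) by (simp add: algebra_simps)
      then show ?thesis using Dadd Dnat x n1 by metis
    next
      case 3
      have "- x = int (nat (pairing a m2 - 1)) * x + int (nat (- x)) * pairing a m2"
        using 3 m2(2) by (simp add: algebra_simps)
      then show ?thesis using Dadd Dnat x n1 by metis
    qed
  qed
  have Dint: "k * x \<in> D" if "x \<in> D" for k :: int and x
  proof (cases "k \<ge> 0")
    case True then show ?thesis using Dnat[OF that, of "nat k"] by simp
  next
    case False
    then have "k * x = - (int (nat (-k)) * x)" by simp
    then show ?thesis using Dneg Dnat[OF that, of "nat (-k)"] by metis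
  qed
  have ex: "\<exists>n::nat. n > 0 \<and> int n \<in> D" using m2 unfolding D_def
    by (intro exI[of _ "nat (pairing a m2)"]) auto
  define dn where "dn = (LEAST n::nat. n > 0 \<and> int n \<in> D)"
  have dnP: "dn > 0 \<and> int dn \<in> D" unfolding dn_def by (rule LeastI_ex[OF ex])
  have dnmin: "\<not> (n > 0 \<and> int n \<in> D)" if "n < dn" for n
    using not_less_Least[of n "\<lambda>n. n > 0 \<and> int n \<in> D"] that unfolding dn_def by blast
  define d where "d = int dn"
  have d0: "d > 0" "d \<in> D" using dnP unfolding d_def by auto
  have Dmod: "x mod d = 0" if x: "x \<in> D" for x
  proof (rule ccontr)
    assume nz: "x mod d \<noteq> 0"
    have e: "x mod d = x + (- (x div d)) * d" by (simp add: minus_div_mult_eq_mod[symmetric])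
    have rD: "x mod d \<in> D" unfolding e by (rule Dadd[OF x Dint[OF d0(2)]])
    have "0 \<le> x mod d" "x mod d < d" using d0(1) by auto
    then have "nat (x mod d) < dn" "nat (x mod d) > 0" using nz unfolding d_def by auto
    then show False using dnmin rD by force
  qed
  define R where "R = {x :: 'K. x ^ dn = 1}"
  have cR: "card R = dn" unfolding R_def by (rule roots_unity_card[OF alg]) (use dnP in simp)
  then have fR: "finite R" using dnP card_ge_0_finite by force
  obtain ud where ud: "q ud \<noteq> 0" "pairing a ud = d" using d0(2) unfolding D_def by blast
  have RS: "R \<subseteq> stabilizer a q"
  proof
    fix x assume "x \<in> R"
    then have xd: "x ^ dn = 1" unfolding R_def by simp
    then have x0: "x \<noteq> 0" using dnP by (auto simp: power_0_left)
    have "act a x q = q"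
    proof
      fix m show "act a x q m = q m"
      proof (cases "q m = 0")
        case True then show ?thesis by (simp add: act_def)
      next
        case False
        then have "pairing a m \<in> D" unfolding D_def by blast
        then have "pairing a m = d * (pairing a m div d)" using Dmod by (metis mult_div_mod_eq add_0_right)
        then have "x powi pairing a m = (x powi d) powi (pairing a m div d)" by (metis power_int_mult)
        also have "x powi d = 1" unfolding d_def using xd by simp
        finally show ?thesis by (simp add: act_def)
      qed
    qed
    then show "x \<in> stabilizer a q" using x0 unfolding stabilizer_def by simp
  qed
  show ?thesis
  proof (intro exI[of _ d] conjI allI impI ballI)
    show "0 \<le> d" using d0 by simp
    fix t assume t: "t \<in> stabilizer a q"
    then show "t \<noteq> 0" unfolding stabilizer_def by simp
    have "act a t q ud = q ud" using t unfolding stabilizer_def by simp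
    then have "t powi d * q ud = q ud" unfolding act_def ud(2) .
    then show "t powi d = 1" using ud(1) by simp
  next
    assume "d = 0" then show "infinite (stabilizer a q)" using d0 by simp
  next
    show "\<exists>R\<subseteq>stabilizer a q. finite R \<and> card R = nat d"
      using RS fR cR unfolding d_def by auto
  next
    fix m assume "q m \<noteq> 0"
    then show "pairing a m mod d = 0" using Dmod unfolding D_def by blast
  next
    fix c :: int assume "c mod d = 0"
    then have "c = (c div d) * d" by (metis mult_div_mod_eq add_0_right mult.commute)
    then have "c \<in> D" using Dint[OF d0(2)] by metis
    then show "\<exists>u. q u \<noteq> 0 \<and> pairing a u = c" unfolding D_def by blast
  qed
qed

lemma tstar_one: "tstar a t 1 = 1"
  by (rule poly_mapping_eqI) (simp add: lookup_tstar lookup_one when_def)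

lemma eval_proj0:
  assumes d: "\<forall>m. q m \<noteq> 0 \<longrightarrow> pairing a m mod d = 0"
  shows "eval_at (proj a d 0 h) q = eval_at h q"
proof -
  have "eval_at (proj a d 0 h) q = (\<Sum>m\<in>Poly_Mapping.keys h. Poly_Mapping.lookup (proj a d 0 h) m * q m)"
    by (rule eval_at_superset) (auto simp: keys_proj[THEN subsetD])
  also have "\<dots> = eval_at h q"
    unfolding eval_at_def lookup_proj by (intro sum.cong refl) (use d in auto)
  finally show ?thesis .
qed

lemma coord_ring_sum: "(\<And>m. m \<in> M \<Longrightarrow> f m \<in> coord_ring V) \<Longrightarrow> sum f M \<in> coord_ring V"
  by (induction M rule: infinite_finite_induct) (auto intro: coord_ring_add)

lemma part3:
  fixes q :: "(int^'n) \<Rightarrow> 'K::field_char_0"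
  assumes alg: "\<forall>p :: 'K poly. degree p > 0 \<longrightarrow> (\<exists>x. poly p x = 0)"
    and q: "q \<in> toric_points V" and nF: "q \<notin> F_star V a"
  shows "H_stalk V a \<alpha> q = J_ideal V a \<alpha> q"
proof -
  define A1 :: "(((int^'n) \<Rightarrow>\<^sub>0 'K) \<times> ((int^'n) \<Rightarrow>\<^sub>0 'K)) set" where "A1 = {(h, 1) | h. h \<in> H_gens V a \<alpha>}"
  define A2 where "A2 = semi_inv_local V a \<alpha> q"
  have A1L: "A1 \<subseteq> local_ring V q"
    unfolding A1_def local_ring_def using H_gens_coord eval_at_1[OF q] by auto
  have A2L: "A2 \<subseteq> local_ring V q" unfolding A2_def semi_inv_local_def by auto
  have A12: "A1 \<subseteq> A2"
  proof
    fix F assume "F \<in> A1"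
    then obtain m where m: "F = (monom m, 1)" "m \<in> dual_semigroup V" "pairing a m = \<alpha>"
      unfolding A1_def H_gens_def by blast
    have "F \<in> local_ring V q" using \<open>F \<in> A1\<close> A1L by blast
    moreover have "frac_eq (tstar a t (fst F), tstar a t (snd F)) (scal (t powi \<alpha>) (fst F), snd F)" for t
    proof -
      have "scal (t powi \<alpha>) (monom m) = Poly_Mapping.single m (t powi \<alpha>)"
        by (simp add: scal_def monom_def mult_single)
      then show ?thesis using m by (simp add: frac_eq_def tstar_one tstar_monom)
    qed
    ultimately show "F \<in> A2" unfolding A2_def semi_inv_local_def by blast
  qed
  obtain d where d0: "d \<ge> 0" and dG: "\<forall>t\<in>stabilizer a q. t \<noteq> 0 \<and> t powi d = 1"
    and dbig0: "d = 0 \<longrightarrow> infinite (stabilizer a q)"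
    and dbig: "d > 0 \<longrightarrow> (\<exists>R\<subseteq>stabilizer a q. finite R \<and> card R = nat d)"
    and dq: "\<forall>m. q m \<noteq> 0 \<longrightarrow> pairing a m mod d = 0"
    and du: "\<forall>c. c mod d = 0 \<longrightarrow> (\<exists>u. q u \<noteq> 0 \<and> pairing a u = c)"
    using d_exists[OF alg q nF] by blast
  let ?L = "local_ideal_gen V q A1"
  have key: "b \<in> ?L" if b: "b \<in> A2" for b
  proof -
    obtain g h where gh: "b = (g, h)" by (cases b)
    have bL: "(g, h) \<in> local_ring V q" using b A2L gh by blast
    then have g: "g \<in> coord_ring V" and h: "h \<in> coord_ring V" and hq: "eval_at h q \<noteq> 0"
      unfolding local_ring_def by auto
    have hyp: "\<forall>t\<in>stabilizer a q. tstar a t g * h = scal (t powi \<alpha>) g * tstar a t h"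
      using b unfolding gh A2_def semi_inv_local_def frac_eq_def by auto
    have sk: "proj a d \<alpha> g * h = g * proj a d 0 h"
      by (rule semi_key[OF d0 dG dbig0 dbig hyp])
    define g' where "g' = proj a d \<alpha> g"
    define h0 where "h0 = proj a d 0 h"
    have g'c: "g' \<in> coord_ring V" unfolding g'_def by (rule proj_coord[OF g])
    have h0c: "h0 \<in> coord_ring V" unfolding h0_def by (rule proj_coord[OF h])
    have h0q: "eval_at h0 q \<noteq> 0" unfolding h0_def using eval_proj0[OF dq] hq by simp
    have sums: "(\<Sum>m\<in>M. Poly_Mapping.single m (Poly_Mapping.lookup g' m), h0) \<in> ?L"
      if "M \<subseteq> Poly_Mapping.keys g'" for M
    proof -
      have "finite M" using that by (rule finite_subset) simp
      then show ?thesis using that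
      proof (induction M rule: finite_induct)
        case empty
        have "(0, h0) \<in> local_ring V q" unfolding local_ring_def using h0c h0q by simp
        moreover have "frac_eq (0, h0) (0, 1)" by (simp add: frac_eq_def)
        ultimately have "(0, h0) \<in> ?L" by (intro local_ideal_gen.equiv[OF local_ideal_gen.zero])
        then show ?case by simp
      next
        case (insert m M)
        define c where "c = Poly_Mapping.lookup g' m"
        define S where "S = (\<Sum>m\<in>M. Poly_Mapping.single m (Poly_Mapping.lookup g' m))"
        have IH: "(S, h0) \<in> ?L" using insert unfolding S_def by blast
        have mk: "m \<in> Poly_Mapping.keys g'" using insert.prems by blast
        then have mS: "m \<in> dual_semigroup V" using g'c unfolding coord_ring_def by blast
        have "Poly_Mapping.lookup g' m \<noteq> 0" using mk by (simp add: in_keys_iff)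
        then have ma: "pairing a m mod d = \<alpha> mod d" unfolding g'_def lookup_proj by (auto split: if_splits)
        have amd: "(\<alpha> - pairing a m) mod d = 0" using ma by (simp add: mod_eq_dvd_iff dvd_eq_mod_eq_0[symmetric] dvd_diff_commute)
        then obtain u where u: "q u \<noteq> 0" "pairing a u = \<alpha> - pairing a m" using du[rule_format, OF amd] by blast
        have uS: "u \<in> dual_semigroup V" using toric_nz_dual[OF q u(1)] .
        define m' where "m' = m + u"
        have m'H: "(monom m' :: (int^'n) \<Rightarrow>\<^sub>0 'K) \<in> H_gens V a \<alpha>"
          unfolding H_gens_def m'_def using dual_add[OF mS uS] u(2) by (auto simp: pairing_add)
        then have m'A: "(monom m', 1) \<in> A1" unfolding A1_def by blast
        have uc: "(monom u :: (int^'n) \<Rightarrow>\<^sub>0 'K) \<in> coord_ring V" by (rule coord_ring_monom[OF uS])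
        have rL: "(Poly_Mapping.single 0 c, h0 * monom u) \<in> local_ring V q"
          unfolding local_ring_def using h0c uc h0q u(1) eval_at_mult[OF h0c uc q] coord_ring_mult[OF h0c uc]
          by (auto simp: coord_ring_single monom_def eval_at_single)
        have X: "frac_add (frac_mult (Poly_Mapping.single 0 c, h0 * monom u) (monom m', 1)) (S, h0) \<in> ?L"
          by (rule local_ideal_gen.step[OF rL m'A IH])
        have kk: "Poly_Mapping.single 0 c * monom m' = Poly_Mapping.single m c * (monom u :: (int^'n) \<Rightarrow>\<^sub>0 'K)"
          by (simp add: monom_def mult_single m'_def)
        have Sc: "S \<in> coord_ring V" unfolding S_def
          by (rule coord_ring_sum) (use g'c insert.prems in \<open>auto simp: coord_ring_def intro!: coord_ring_single\<close>)
        have mc: "Poly_Mapping.single m c \<in> coord_ring V" by (rule coord_ring_single[OF mS])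
        have tgt: "(\<Sum>m\<in>insert m M. Poly_Mapping.single m (Poly_Mapping.lookup g' m)) = Poly_Mapping.single m c + S"
          unfolding S_def c_def using insert.hyps by simp
        have tL: "(Poly_Mapping.single m c + S, h0) \<in> local_ring V q"
          unfolding local_ring_def using coord_ring_add[OF mc Sc] h0c h0q by simp
        have eq: "frac_eq (Poly_Mapping.single m c + S, h0)
                    (frac_add (frac_mult (Poly_Mapping.single 0 c, h0 * monom u) (monom m', 1)) (S, h0))"
          unfolding frac_eq_def frac_add_def frac_mult_def fst_conv snd_conv kk
          by (simp add: algebra_simps)
        show ?case unfolding tgt by (rule local_ideal_gen.equiv[OF X tL eq])
      qed
    qed
    have "g' = (\<Sum>m\<in>Poly_Mapping.keys g'. Poly_Mapping.single m (Poly_Mapping.lookup g' m))"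
      by (rule pm_expand) auto
    then have g'L: "(g', h0) \<in> ?L" using sums[of "Poly_Mapping.keys g'"] by simp
    have "frac_eq (g, h) (g', h0)" unfolding frac_eq_def g'_def h0_def using sk by simp
    then show ?thesis unfolding gh by (rule local_ideal_gen.equiv[OF g'L bL])
  qed
  show ?thesis
  proof
    show "H_stalk V a \<alpha> q \<subseteq> J_ideal V a \<alpha> q"
      unfolding H_stalk_def J_ideal_def using lig_mono[OF A12] unfolding A1_def A2_def by blast
    show "J_ideal V a \<alpha> q \<subseteq> H_stalk V a \<alpha> q"
    proof
      fix F assume "F \<in> J_ideal V a \<alpha> q"
      then have "F \<in> local_ideal_gen V q A2" unfolding J_ideal_def A2_def .
      then have "F \<in> ?L"
      proof (induction rule: local_ideal_gen.induct)
        case zero then show ?case by (rule local_ideal_gen.zero)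
      next
        case (step r b F)
        show ?case by (rule lig_closure[OF q A1L key[OF step.hyps(2)] step.IH step.hyps(1)])
      next
        case (equiv F G)
        then show ?case using local_ideal_gen.equiv by blast
      qed
      then show "F \<in> H_stalk V a \<alpha> q" unfolding H_stalk_def A1_def .
    qed
  qed
qed

theorem mainTheorem8:
  fixes V :: "(int^'n) set" and a :: "int^'n" and \<alpha> :: int
    and K_witness :: "'K::field_char_0 itself"
  assumes alg_closed: "\<forall>p :: 'K poly. degree p > 0 \<longrightarrow> (\<exists>x. poly p x = 0)"
    and nonsing: "nonsingular_gens V"
  shows "(\<exists>B. finite B \<and> B \<subseteq> coord_ring V \<and>
             ring_ideal_gen V B = ring_ideal_gen V (H_gens V a \<alpha> :: ((int^'n) \<Rightarrow>\<^sub>0 'K) set))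
       \<and> (\<forall>t::'K. t \<noteq> 0 \<longrightarrow> (\<forall>f\<in>ring_ideal_gen V (H_gens V a \<alpha>).
             tstar a t f \<in> ring_ideal_gen V (H_gens V a \<alpha>)))
       \<and> (\<forall>q :: (int^'n) \<Rightarrow> 'K. q \<in> toric_points V - F_star V a \<longrightarrow>
             H_stalk V a \<alpha> q = J_ideal V a \<alpha> q)"
proof -
  have finV: "finite V"
    using nonsing unfolding nonsingular_gens_def Z_basis_def using finite_subset by blast
  show ?thesis
  proof (intro conjI allI impI ballI)
    show "\<exists>B. finite B \<and> B \<subseteq> coord_ring V \<and>
             ring_ideal_gen V B = ring_ideal_gen V (H_gens V a \<alpha> :: ((int^'n) \<Rightarrow>\<^sub>0 'K) set)"
      by (rule part1[OF finV])
  next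
    fix t :: 'K and f :: "(int^'n) \<Rightarrow>\<^sub>0 'K" assume "t \<noteq> 0" "f \<in> ring_ideal_gen V (H_gens V a \<alpha>)"
    then show "tstar a t f \<in> ring_ideal_gen V (H_gens V a \<alpha>)" by (rule part2)
  next
    fix q :: "(int^'n) \<Rightarrow> 'K" assume "q \<in> toric_points V - F_star V a"
    then show "H_stalk V a \<alpha> q = J_ideal V a \<alpha> q"
      using part3[OF alg_closed] by blast
  qed
qed

end
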